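(* Given $i \in [n-3]$, $j \in [n-2]$ and $k\in [n-1]$ such that $i\leq j\leq k$, we have $\langle i,j,k\rangle\in \mathcal{W}^{\Theta}$ if, and only if, one of the following happens: (1) $a_i,a_j,a_k \not\in\Theta$; (2) $j=i+1$, $a_i \in \Theta$ and $a_{i+1},a_k \not\in\Theta$; (3) $k=j+1$, $a_j \in \Theta$ and $a_i, a_{j+1} \not\in\Theta$; (4) $k-1=j=i+1$, $a_i,a_{i+1} \in \Theta$ and $a_{i+2} \not\in\Theta$.
   Context: Let $n\geq 2$ and $[m]=\{1,\dots,m\}$. Let $S_n$ be the symmetric group (Weyl group of type $A_{n-1}$), generated by the simple reflections $s_i=(i,i+1)$, $i\in[n-1]$, with simple roots $\Sigma=\{a_1,\dots,a_{n-1}\}$. For $\Theta\subset\Sigma$, let $\mathcal{W}^{\Theta}=\{w\in S_n : \ell(w)<\ell(ws_i) \text{ for all } a_i\in\Theta\}$ be the set of minimal length representatives of the cosets of the parabolic subgroup $\mathcal{W}_\Theta=\langle s_i : a_i\in\Theta\rangle$; equivalently, writing $\Sigma\setminus\Theta=\{a_{k_1},\dots,a_{k_r}\}$ with $k_1<\dots<k_r$, $\mathcal{W}^{\Theta}$ consists of the permutations $w$ (in one-line notation $w(1)\cdots w(n)$) whose descents can occur only at positions $k_1,\dots,k_r$. The code of $w\in S_n$ is $\alpha=(\alpha_1,\dots,\alpha_{n-1})$ with $\alpha_i=\#\{k>i : w(k)<w(i)\}$. The code spectrum of $w$ is the unique weakly increasing sequence $0<b_1\leq b_2\leq\cdots\leq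 b_l<n$ such that $\alpha_i=\#\{j : b_j=i\}$ for each $i$; the permutation with code spectrum $b_1,\dots,b_l$ is denoted $\langle b_1,\dots,b_l\rangle$. Thus $\langle i,j,k\rangle$ denotes the permutation of length $3$ whose code has one box in each of rows $i$, $j$, $k$ (counted with multiplicity). *)

theory Defs
  imports "HOL-Combinatorics.Permutations" "HOL-Library.Multiset"
begin

definition perm_code :: "nat \<Rightarrow> (nat \<Rightarrow> nat) \<Rightarrow> nat \<Rightarrow> nat" where
  "perm_code n w i = card {k \<in> {i<..n}. w k < w i}"

definition spectrum_perm :: "nat \<Rightarrow> nat list \<Rightarrow> (nat \<Rightarrow> nat)" where
  "spectrum_perm n bs = (THE w. w permutes {1..n} \<and>
      (\<forall>i \<in> {1..n-1}. perm_code n w i = count (mset bs) i))"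

text \<open>Coxeter length in type A_{n-1} = number of inversions.\<close>
definition perm_length :: "nat \<Rightarrow> (nat \<Rightarrow> nat) \<Rightarrow> nat" where
  "perm_length n w = card {(a, b). a \<in> {1..n} \<and> b \<in> {1..n} \<and> a < b \<and> w b < w a}"

definition simple_refl :: "nat \<Rightarrow> nat \<Rightarrow> nat" where
  "simple_refl i = transpose i (Suc i)"

text \<open>W^Theta, with Theta given as the set of indices i of the simple roots a_i in Theta.\<close>
definition min_reps :: "nat \<Rightarrow> nat set \<Rightarrow> (nat \<Rightarrow> nat) set" where
  "min_reps n Theta = {w. w permutes {1..n} \<and>
      (\<forall>i \<in> Theta. perm_length n w < perm_length n (w \<circ> simple_refl i))}"

end

theory Submission
  imports Defs "HOL-Library.FuncSet"
begin

lemma code_uniq: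
  assumes w: "w permutes {1..n}" and v: "v permutes {1..n}"
    and c: "\<forall>p\<in>{1..n}. perm_code n w p = perm_code n v p"
  shows "w = v"
proof -
  have key: "\<And>u p. u permutes {1..n} \<Longrightarrow> p \<in> {1..n} \<Longrightarrow>
      perm_code n u p = card {x \<in> u ` {p..n}. x < u p}"
  proof -
    fix u p assume u: "u permutes {1..n}" and p: "p \<in> {1..n}"
    have inj: "inj u" using u permutes_inj by blast
    have "{x \<in> u ` {p..n}. x < u p} = u ` {q \<in> {p<..n}. u q < u p}"
    proof -
      have "{p..n} = insert p {p<..n}" using p by auto
      then show ?thesis by auto
    qed
    moreover have "card (u ` {q \<in> {p<..n}. u q < u p}) = card {q \<in> {p<..n}. u q < u p}"
      by (rule card_image) (meson inj inj_on_subset subset_UNIV)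
    ultimately show "perm_code n u p = card {x \<in> u ` {p..n}. x < u p}"
      unfolding perm_code_def by simp
  qed
  have "\<forall>q<p. w q = v q" for p
  proof (induction p rule: less_induct)
    case (less p)
    show ?case
    proof (intro allI impI)
      fix q assume qp: "q < p"
      have IH: "\<forall>r<q. w r = v r" using less qp by auto
      show "w q = v q"
      proof (cases "q \<in> {1..n}")
        case False
        then show ?thesis using w v permutes_not_in by metis
      next
        case True
        have imgw: "w ` {q..n} = {1..n} - w ` {1..<q}"
        proof -
          have "w ` {1..n} = {1..n}" using w permutes_image by blast
          moreover have "{1..n} = {1..<q} \<union> {q..n}" using True by auto
          moreover have "w ` {1..<q} \<inter> w ` {q..n} = {}"
            using permutes_inj[OF w] by (fastforce simp: inj_def)
          ultimately show ?thesis by auto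
        qed
        have imgv: "v ` {q..n} = {1..n} - v ` {1..<q}"
        proof -
          have "v ` {1..n} = {1..n}" using v permutes_image by blast
          moreover have "{1..n} = {1..<q} \<union> {q..n}" using True by auto
          moreover have "v ` {1..<q} \<inter> v ` {q..n} = {}"
            using permutes_inj[OF v] by (fastforce simp: inj_def)
          ultimately show ?thesis by auto
        qed
        have "w ` {1..<q} = v ` {1..<q}" using IH by auto
        hence S: "w ` {q..n} = v ` {q..n}" using imgw imgv by simp
        define S where "S = v ` {q..n}"
        have fin: "finite S" unfolding S_def by simp
        have wq: "w q \<in> S" using S True unfolding S_def by (metis atLeastAtMost_iff imageI order_refl)
        have vq: "v q \<in> S" using True unfolding S_def by auto
        have eq: "card {x \<in> S. x < w q} = card {x \<in> S. x < v q}"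
          using key[OF w True] key[OF v True] c True S unfolding S_def by metis
        have lt: "card {x \<in> S. x < a} < card {x \<in> S. x < b}" if "a \<in> S" "a < b" for a b
          by (rule psubset_card_mono) (use fin that in auto)
        show ?thesis
        proof (rule ccontr)
          assume "w q \<noteq> v q"
          hence "w q < v q \<or> v q < w q" by auto
          thus False using lt[OF wq] lt[OF vq] eq by fastforce
        qed
      qed
    qed
  qed
  hence "\<forall>q. w q = v q" by (meson lessI)
  thus ?thesis by auto
qed


lemma code_bound:
  assumes "p \<in> {1..n}" shows "perm_code n w p \<le> n - p"
proof -
  have "perm_code n w p \<le> card {p<..n}" unfolding perm_code_def
    by (rule card_mono) auto
  thus ?thesis by simp
qed

lemma code_n: "perm_code n w n = 0"
  unfolding perm_code_def by simp

lemma code_exists: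
  assumes a: "a \<in> (\<Pi>\<^sub>E p\<in>{1..n}. {0..n-p})"
  shows "\<exists>w. w permutes {1..n} \<and> (\<forall>p\<in>{1..n}. perm_code n w p = a p)"
proof -
  define P where "P = {w. w permutes {1..n}}"
  define C where "C = (\<Pi>\<^sub>E p\<in>{1..n}. {0..n-p})"
  define F where "F = (\<lambda>w. restrict (perm_code n w) {1..n})"
  have inj: "inj_on F P"
  proof (rule inj_onI)
    fix w v assume wv: "w \<in> P" "v \<in> P" and eq: "F w = F v"
    have "\<forall>p\<in>{1..n}. perm_code n w p = perm_code n v p"
    proof
      fix p assume "p \<in> {1..n}"
      with fun_cong[OF eq, of p] show "perm_code n w p = perm_code n v p" by (simp add: F_def)
    qed
    thus "w = v" using wv unfolding P_def by (intro code_uniq) auto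
  qed
  have sub: "F ` P \<subseteq> C" unfolding F_def C_def using code_bound by auto
  have cP: "card P = fact n" unfolding P_def by (rule card_permutations) auto
  have "card C = (\<Prod>p\<in>{1..n}. Suc (n - p))" unfolding C_def by (simp add: card_PiE)
  also have "\<dots> = (\<Prod>p\<in>{1..n}. Suc (n - (n + 1 - p)))"
    by (rule prod.atLeastAtMost_rev)
  also have "\<dots> = (\<Prod>p\<in>{1..n}. p)"
    by (rule prod.cong) auto
  also have "\<dots> = fact n" by (simp add: fact_prod)
  finally have cC: "card C = fact n" .
  have "card (F ` P) = card C" using card_image[OF inj] cP cC by simp
  hence "F ` P = C" using sub by (intro card_subset_eq) (auto simp: C_def finite_PiE)
  then obtain w where "w \<in> P" "F w = a" using a unfolding C_def by (metis imageE)
  hence "w permutes {1..n}" "\<And>p. p \<in> {1..n} \<Longrightarrow> perm_code n w p = a p"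
    unfolding P_def F_def by (auto dest: fun_cong)
  thus ?thesis by blast
qed

lemma descent:
  assumes w: "w permutes {1..n}" and p: "1 \<le> p" "Suc p \<le> n"
  shows "w p < w (Suc p) \<longleftrightarrow> perm_code n w p \<le> perm_code n w (Suc p)"
proof -
  have ne: "w p \<noteq> w (Suc p)" using permutes_inj[OF w] by (metis inj_eq n_not_Suc_n)
  have iv: "{p<..n} = insert (Suc p) {Suc p<..n}" using p by auto
  have split: "{q \<in> {p<..n}. w q < w p} = (if w (Suc p) < w p then insert (Suc p) else id) {q \<in> {Suc p<..n}. w q < w p}"
    unfolding iv by auto
  have fin: "finite {q \<in> {Suc p<..n}. w q < w p}" by simp
  show ?thesis
  proof (cases "w p < w (Suc p)")
    case True
    hence "perm_code n w p = card {q \<in> {Suc p<..n}. w q < w p}"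
      unfolding perm_code_def using split by simp
    also have "\<dots> \<le> perm_code n w (Suc p)" unfolding perm_code_def
      by (rule card_mono) (use True in auto)
    finally show ?thesis using True by simp
  next
    case False
    hence lt: "w (Suc p) < w p" using ne by simp
    hence "perm_code n w p = Suc (card {q \<in> {Suc p<..n}. w q < w p})"
      unfolding perm_code_def using split fin by simp
    moreover have "perm_code n w (Suc p) \<le> card {q \<in> {Suc p<..n}. w q < w p}" unfolding perm_code_def
      by (rule card_mono) (use lt in auto)
    ultimately show ?thesis using False by simp
  qed
qed

lemma length_up:
  assumes w: "w permutes {1..n}" and p: "1 \<le> p" "Suc p \<le> n" and lt: "w p < w (Suc p)"
  shows "perm_length n w < perm_length n (w \<circ> simple_refl p)"
proof -
  define s where "s = simple_refl p"
  define I where "I = (\<lambda>u::nat\<Rightarrow>nat. {(a, b). a \<in> {1..n} \<and> b \<in> {1..n} \<and> a < b \<and> u b < u a})"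
  define g where "g = (\<lambda>(a, b). (s a, s b))"
  have ss: "\<And>x. s (s x) = x" unfolding s_def simple_refl_def by simp
  have fin: "finite (I (w \<circ> s))"
    by (rule finite_subset[of _ "{1..n} \<times> {1..n}"]) (auto simp: I_def)
  have injg: "inj_on g (I w)" unfolding g_def
    by (rule inj_onI) (auto, metis ss, metis ss)
  have sub: "insert (p, Suc p) (g ` I w) \<subseteq> I (w \<circ> s)"
  proof
    fix x assume "x \<in> insert (p, Suc p) (g ` I w)"
    then consider "x = (p, Suc p)" | a b where "x = (s a, s b)" "(a, b) \<in> I w"
      unfolding g_def by auto
    then show "x \<in> I (w \<circ> s)"
    proof cases
      case 1
      then show ?thesis using p lt by (auto simp: I_def s_def simple_refl_def)
    next
      case 2
      have "s a \<in> {1..n}" "s b \<in> {1..n}" "s a < s b"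
        using 2 p lt unfolding I_def s_def simple_refl_def transpose_def by auto
      moreover have "(w \<circ> s) (s b) < (w \<circ> s) (s a)" using 2 ss by (auto simp: I_def)
      ultimately show ?thesis using 2 by (auto simp: I_def)
    qed
  qed
  have notin: "(p, Suc p) \<notin> g ` I w"
  proof
    assume "(p, Suc p) \<in> g ` I w"
    then obtain a b where "(a, b) \<in> I w" "s a = p" "s b = Suc p" unfolding g_def by auto
    hence "a = Suc p" "b = p" using ss by (metis s_def simple_refl_def transpose_apply_first, metis s_def simple_refl_def transpose_apply_second)
    thus False using \<open>(a, b) \<in> I w\<close> by (auto simp: I_def)
  qed
  have "card (I w) < card (insert (p, Suc p) (g ` I w))"
    using notin card_image[OF injg] fin sub finite_subset by fastforce
  also have "\<dots> \<le> card (I (w \<circ> s))" by (rule card_mono[OF fin sub])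
  finally show ?thesis unfolding perm_length_def I_def s_def by simp
qed

lemma length_iff:
  assumes w: "w permutes {1..n}" and p: "1 \<le> p" "Suc p \<le> n"
  shows "perm_length n w < perm_length n (w \<circ> simple_refl p) \<longleftrightarrow> w p < w (Suc p)"
proof
  assume h: "perm_length n w < perm_length n (w \<circ> simple_refl p)"
  show "w p < w (Suc p)"
  proof (rule ccontr)
    assume "\<not> w p < w (Suc p)"
    moreover have "w p \<noteq> w (Suc p)" using permutes_inj[OF w] by (metis inj_eq n_not_Suc_n)
    ultimately have lt: "w (Suc p) < w p" by simp
    have w': "w \<circ> simple_refl p permutes {1..n}"
      unfolding simple_refl_def using p
      by (intro permutes_compose[OF permutes_swap_id w]) auto
    have "perm_length n (w \<circ> simple_refl p) < perm_length n ((w \<circ> simple_refl p) \<circ> simple_refl p)"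
      by (rule length_up[OF w' p]) (use lt in \<open>simp add: simple_refl_def\<close>)
    moreover have "(w \<circ> simple_refl p) \<circ> simple_refl p = w"
      by (simp add: simple_refl_def comp_assoc)
    ultimately show False using h by simp
  qed
qed (rule length_up[OF w p])


theorem lemma5p2:
  fixes n i j k :: nat and Theta :: "nat set"
  assumes "n \<ge> 2" and "Theta \<subseteq> {1..n-1}"
    and "i \<in> {1..n-3}" and "j \<in> {1..n-2}" and "k \<in> {1..n-1}"
    and "i \<le> j" and "j \<le> k"
  shows "spectrum_perm n [i, j, k] \<in> min_reps n Theta \<longleftrightarrow>
    ((i \<notin> Theta \<and> j \<notin> Theta \<and> k \<notin> Theta) \<or>
     (j = i + 1 \<and> i \<in> Theta \<and> i + 1 \<notin> Theta \<and> k \<notin> Theta) \<or>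
     (k = j + 1 \<and> j \<in> Theta \<and> i \<notin> Theta \<and> j + 1 \<notin> Theta) \<or>
     (k - 1 = j \<and> j = i + 1 \<and> i \<in> Theta \<and> i + 1 \<in> Theta \<and> i + 2 \<notin> Theta))"
proof -
  define c where "c = (\<lambda>p. count (mset [i, j, k]) p)"
  have cnt: "c p = (if p = i then 1 else 0) + (if p = j then 1 else 0) + (if p = k then 1 else 0)" for p
    unfolding c_def by simp
  have a: "restrict c {1..n} \<in> (\<Pi>\<^sub>E p\<in>{1..n}. {0..n-p})"
    using assms unfolding cnt by auto
  obtain w where w: "w permutes {1..n}" and wc: "\<And>p. p \<in> {1..n} \<Longrightarrow> perm_code n w p = c p"
    using code_exists[OF a] by auto
  have sp: "spectrum_perm n [i, j, k] = w"
    unfolding spectrum_perm_def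
  proof (rule the_equality)
    show "w permutes {1..n} \<and> (\<forall>p\<in>{1..n - 1}. perm_code n w p = count (mset [i, j, k]) p)"
      using w wc unfolding c_def by auto
  next
    fix v assume v: "v permutes {1..n} \<and> (\<forall>p\<in>{1..n - 1}. perm_code n v p = count (mset [i, j, k]) p)"
    have "\<forall>p\<in>{1..n}. perm_code n v p = perm_code n w p"
    proof
      fix p assume p: "p \<in> {1..n}"
      show "perm_code n v p = perm_code n w p"
      proof (cases "p = n")
        case True thus ?thesis by (simp add: code_n)
      next
        case False thus ?thesis using v wc p unfolding c_def by auto
      qed
    qed
    thus "v = w" using v w by (intro code_uniq) auto
  qed
  have "spectrum_perm n [i, j, k] \<in> min_reps n Theta \<longleftrightarrow> (\<forall>p\<in>Theta. c p \<le> c (Suc p))"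
    unfolding sp min_reps_def
  proof -
    have "\<forall>p\<in>Theta. (perm_length n w < perm_length n (w \<circ> simple_refl p)) = (c p \<le> c (Suc p))"
    proof
      fix p assume "p \<in> Theta"
      hence "p \<in> {1..n-1}" using assms(2) by blast
      hence p: "1 \<le> p" "Suc p \<le> n" using assms(1) by auto
      show "(perm_length n w < perm_length n (w \<circ> simple_refl p)) = (c p \<le> c (Suc p))"
        using length_iff[OF w p] descent[OF w p] wc[of p] wc[of "Suc p"] p by simp
    qed
    thus "(w \<in> {w. w permutes {1..n} \<and> (\<forall>i\<in>Theta. perm_length n w < perm_length n (w \<circ> simple_refl i))}) =
      (\<forall>p\<in>Theta. c p \<le> c (Suc p))" using w by auto
  qed
  also have "\<dots> \<longleftrightarrow> ((i \<notin> Theta \<and> j \<notin> Theta \<and> k \<notin> Theta) \<or>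
     (j = i + 1 \<and> i \<in> Theta \<and> i + 1 \<notin> Theta \<and> k \<notin> Theta) \<or>
     (k = j + 1 \<and> j \<in> Theta \<and> i \<notin> Theta \<and> j + 1 \<notin> Theta) \<or>
     (k - 1 = j \<and> j = i + 1 \<and> i \<in> Theta \<and> i + 1 \<in> Theta \<and> i + 2 \<notin> Theta))"
  proof
    assume H: "\<forall>p\<in>Theta. c p \<le> c (Suc p)"
    have Hk: "k \<notin> Theta" using H[rule_format, of k] assms(6,7) unfolding cnt by (auto split: if_splits)
    have Hj: "j \<in> Theta \<Longrightarrow> k = Suc j" using H[rule_format, of j] assms(6,7) unfolding cnt
      by (auto split: if_splits)
    have Hi: "i \<in> Theta \<Longrightarrow> j = Suc i" using H[rule_format, of i] assms(6,7) unfolding cnt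
      by (auto split: if_splits)
    show "((i \<notin> Theta \<and> j \<notin> Theta \<and> k \<notin> Theta) \<or>
     (j = i + 1 \<and> i \<in> Theta \<and> i + 1 \<notin> Theta \<and> k \<notin> Theta) \<or>
     (k = j + 1 \<and> j \<in> Theta \<and> i \<notin> Theta \<and> j + 1 \<notin> Theta) \<or>
     (k - 1 = j \<and> j = i + 1 \<and> i \<in> Theta \<and> i + 1 \<in> Theta \<and> i + 2 \<notin> Theta))"
      using Hk Hj Hi by (cases "i \<in> Theta"; cases "j \<in> Theta") auto
  next
    assume R: "((i \<notin> Theta \<and> j \<notin> Theta \<and> k \<notin> Theta) \<or>
     (j = i + 1 \<and> i \<in> Theta \<and> i + 1 \<notin> Theta \<and> k \<notin> Theta) \<or>
     (k = j + 1 \<and> j \<in> Theta \<and> i \<notin> Theta \<and> j + 1 \<notin> Theta) \<or>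
     (k - 1 = j \<and> j = i + 1 \<and> i \<in> Theta \<and> i + 1 \<in> Theta \<and> i + 2 \<notin> Theta))"
    have kk: "k - 1 = j \<Longrightarrow> k = Suc j" using assms(4,7) by auto
    show "\<forall>p\<in>Theta. c p \<le> c (Suc p)"
    proof
      fix p assume pT: "p \<in> Theta"
      show "c p \<le> c (Suc p)"
        using R pT assms(6,7) kk unfolding cnt by (auto split: if_splits)
    qed
  qed
  finally show ?thesis .
qed

end
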